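(* Let $n\in\mathbb{N}$ and let $\mathcal{K}^n$ be the $n$-dimensional Khalimsky space. Then $\mathcal{K}^n$ is a connected Alexandroff space whose set of closed points is $\{(2\lambda_1,\ldots,2\lambda_n):\lambda_1,\ldots,\lambda_n\in\mathbb{Z}\}$. Consequently a map $f:\mathcal{K}^n\to\mathcal{K}^n$ has closed graph if and only if $f$ is constant with value $(2\lambda_1,\ldots,2\lambda_n)$ for some integers $\lambda_1,\ldots,\lambda_n$; in particular there are countably infinitely many self-maps of $\mathcal{K}^n$ with closed graph. Moreover, the constant map $g:\mathcal{K}^n\to\mathcal{K}^n$ with value $(1,\ldots,1)$ is continuous but does not have closed graph.
   Context: The Khalimsky line $\mathcal{K}$ is $\mathbb{Z}$ with the topology generated by the base consisting of all sets $\{2m+1\}$ and $\{2m-1,2m,2m+1\}$ for $m\in\mathbb{Z}$; $\mathcal{K}^n$ is the $n$-fold product with the product topology. A map $f:X\to Y$ has closed graph if $G_f=\{(x,f(x)):x\in X\}$ is closed in $X\times Y$. A point $y$ is closed if $\{y\}$ is closed. A topological space is an Alexandroff space if the intersection of every nonempty family of open sets is open. *)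

theory Defs
  imports "HOL-Analysis.Analysis"
begin

definition khalimsky_line :: "int topology" where
  "khalimsky_line = topology_generated_by
     ((\<lambda>m. {2*m+1}) ` UNIV \<union> (\<lambda>m. {2*m-1, 2*m, 2*m+1}) ` UNIV)"

text \<open>The n-dimensional Khalimsky space: n-fold product of the Khalimsky line,
  points are extensional functions on the index set {0..<n}.\<close>
definition khalimsky_space :: "nat \<Rightarrow> (nat \<Rightarrow> int) topology" where
  "khalimsky_space n = product_topology (\<lambda>i. khalimsky_line) {..<n}"

definition alexandroff_space :: "'a topology \<Rightarrow> bool" where
  "alexandroff_space X \<longleftrightarrow>
     (\<forall>F. F \<noteq> {} \<and> (\<forall>U\<in>F. openin X U) \<longrightarrow> openin X (\<Inter>F))"

definition closed_graph :: "'a topology \<Rightarrow> 'b topology \<Rightarrow> ('a \<Rightarrow> 'b) \<Rightarrow> bool" where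
  "closed_graph X Y f \<longleftrightarrow>
     closedin (prod_topology X Y) {(x, f x) | x. x \<in> topspace X}"

end

theory Submission
  imports Defs
begin


definition N1 :: "int \<Rightarrow> int set" where
  "N1 a = (if odd a then {a} else {a-1,a,a+1})"

lemma N1_self: "a \<in> N1 a" by (simp add: N1_def)

lemma N1_trans: "b \<in> N1 a \<Longrightarrow> N1 b \<subseteq> N1 a"
  by (auto simp: N1_def split: if_splits)

lemma N1_even: "even b \<Longrightarrow> b \<in> N1 a \<Longrightarrow> a = b"
  by (auto simp: N1_def split: if_splits)

lemma N1_odd: "odd b \<Longrightarrow> b \<in> N1 (b+1)"
  by (auto simp: N1_def)

lemma line_open: "openin khalimsky_line U \<longleftrightarrow> (\<forall>x\<in>U. N1 x \<subseteq> U)"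
proof
  assume "openin khalimsky_line U"
  then have g: "generate_topology_on ((\<lambda>m. {2*m+1}) ` UNIV \<union> (\<lambda>m. {2*m-1, 2*m, 2*m+1::int}) ` UNIV) U"
    unfolding khalimsky_line_def openin_topology_generated_by_iff .
  show "\<forall>x\<in>U. N1 x \<subseteq> U"
  proof (rule generate_topology_on_coarsest[OF _ _ g, where T="\<lambda>U. \<forall>x\<in>U. N1 x \<subseteq> U"])
    show "istopology (\<lambda>U. \<forall>x\<in>U. N1 x \<subseteq> U)"
      unfolding istopology_def by blast
  next
    fix S assume "S \<in> (\<lambda>m. {2*m+1}) ` UNIV \<union> (\<lambda>m. {2*m-1, 2*m, 2*m+1::int}) ` UNIV"
    then show "\<forall>x\<in>S. N1 x \<subseteq> S"
      by (auto simp: N1_def)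
  qed
next
  assume H: "\<forall>x\<in>U. N1 x \<subseteq> U"
  have U: "U = \<Union>(N1 ` U)" using H N1_self by blast
  have b: "N1 x \<in> (\<lambda>m. {2*m+1}) ` UNIV \<union> (\<lambda>m. {2*m-1, 2*m, 2*m+1::int}) ` UNIV" for x
  proof (cases "odd x")
    case True
    then have "x = 2*(x div 2)+1" by presburger
    then show ?thesis using True by (auto simp: N1_def intro!: image_eqI[where x="x div 2"])
  next
    case False
    then have "x = 2*(x div 2)" by presburger
    then show ?thesis using False by (auto simp: N1_def intro!: image_eqI[where x="x div 2"])
  qed
  show "openin khalimsky_line U"
    unfolding khalimsky_line_def openin_topology_generated_by_iff
    by (subst U, rule generate_topology_on.UN) (use b generate_topology_on.Basis in blast)
qed

lemma topspace_line: "topspace khalimsky_line = UNIV"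
  using line_open[of UNIV] openin_subset by blast

lemma connected_line: "connected_space khalimsky_line"
  unfolding connected_space_clopen_in
proof (intro allI impI)
  fix T assume "openin khalimsky_line T \<and> closedin khalimsky_line T"
  then have A: "\<forall>x\<in>T. N1 x \<subseteq> T" and B: "\<forall>x\<in>-T. N1 x \<subseteq> -T"
    by (auto simp: line_open closedin_def topspace_line Compl_eq_Diff_UNIV)
  have step: "x \<in> T \<Longrightarrow> x + 1 \<in> T \<and> x - 1 \<in> T" for x
  proof (cases "odd x")
    case True
    assume x: "x \<in> T"
    have "x \<in> N1 (x+1)" "x \<in> N1 (x-1)" using True by (auto simp: N1_def)
    then show ?thesis using B x by blast
  next
    case False
    assume x: "x \<in> T"
    have "x+1 \<in> N1 x" "x-1 \<in> N1 x" using False by (auto simp: N1_def)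
    then show ?thesis using A x by blast
  qed
  show "T = {} \<or> T = topspace khalimsky_line"
  proof (cases "T = {}")
    case False
    then obtain k where k: "k \<in> T" by blast
    have "i \<in> T" for i
      by (induct i rule: int_induct[where k=k]) (use k step in auto)
    then show ?thesis by (auto simp: topspace_line)
  qed simp
qed



definition KT :: "nat \<Rightarrow> (nat \<Rightarrow> int) set" where
  "KT n = PiE {..<n} (\<lambda>_. UNIV)"

definition NN :: "nat \<Rightarrow> (nat \<Rightarrow> int) \<Rightarrow> (nat \<Rightarrow> int) set" where
  "NN n x = PiE {..<n} (\<lambda>i. N1 (x i))"

lemma topspace_K: "topspace (khalimsky_space n) = KT n"
  by (simp add: khalimsky_space_def KT_def topspace_line)

lemma NN_sub: "NN n x \<subseteq> KT n" by (auto simp: NN_def KT_def)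

lemma NN_self: "x \<in> KT n \<Longrightarrow> x \<in> NN n x"
  unfolding NN_def KT_def PiE_iff by (simp add: N1_self)

lemma K_open: "openin (khalimsky_space n) S \<longleftrightarrow> S \<subseteq> KT n \<and> (\<forall>x\<in>S. NN n x \<subseteq> S)"
proof
  assume o: "openin (khalimsky_space n) S"
  have "S \<subseteq> KT n" using openin_subset[OF o] topspace_K by metis
  moreover have "NN n x \<subseteq> S" if x: "x \<in> S" for x
  proof -
    have "\<exists>U. finite {i \<in> {..<n}. U i \<noteq> topspace khalimsky_line} \<and>
             (\<forall>i\<in>{..<n}. openin khalimsky_line (U i)) \<and> x \<in> PiE {..<n} U \<and> PiE {..<n} U \<subseteq> S"
      using bspec[OF o[unfolded khalimsky_space_def openin_product_topology_alt] x] .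
    then obtain U where U: "\<forall>i\<in>{..<n}. openin khalimsky_line (U i)" "x \<in> PiE {..<n} U" "PiE {..<n} U \<subseteq> S"
      by (elim exE conjE) blast
    have "N1 (x i) \<subseteq> U i" if "i \<in> {..<n}" for i
    proof -
      have "x i \<in> U i" using U(2) that by (rule PiE_mem)
      moreover have "openin khalimsky_line (U i)" using U(1) that by blast
      ultimately show ?thesis unfolding line_open by blast
    qed
    then have "NN n x \<subseteq> PiE {..<n} U" unfolding NN_def by (rule PiE_mono)
    then show ?thesis using U(3) by blast
  qed
  ultimately show "S \<subseteq> KT n \<and> (\<forall>x\<in>S. NN n x \<subseteq> S)" by blast
next
  assume H: "S \<subseteq> KT n \<and> (\<forall>x\<in>S. NN n x \<subseteq> S)"
  show "openin (khalimsky_space n) S"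
    unfolding khalimsky_space_def openin_product_topology_alt
  proof
    fix x assume x: "x \<in> S"
    show "\<exists>U. finite {i \<in> {..<n}. U i \<noteq> topspace khalimsky_line} \<and>
             (\<forall>i\<in>{..<n}. openin khalimsky_line (U i)) \<and> x \<in> PiE {..<n} U \<and> PiE {..<n} U \<subseteq> S"
    proof (intro exI conjI)
      show "finite {i \<in> {..<n}. N1 (x i) \<noteq> topspace khalimsky_line}" by simp
      show "\<forall>i\<in>{..<n}. openin khalimsky_line (N1 (x i))"
        by (simp add: line_open N1_trans)
      show "x \<in> PiE {..<n} (\<lambda>i. N1 (x i))" proof -
        have "x \<in> KT n" using H x by blast
        then show ?thesis using NN_self[of x n] unfolding NN_def by simp
      qed
      show "PiE {..<n} (\<lambda>i. N1 (x i)) \<subseteq> S" using H x unfolding NN_def by simp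
    qed
  qed
qed

lemma K_connected: "connected_space (khalimsky_space n)"
  unfolding khalimsky_space_def connected_space_product_topology
  using connected_line by blast

lemma K_alex: "alexandroff_space (khalimsky_space n)"
  unfolding alexandroff_space_def K_open by blast

lemma K_closed_pt: "closedin (khalimsky_space n) {p} \<longleftrightarrow>
   p \<in> KT n \<and> (\<forall>z\<in>KT n. z \<noteq> p \<longrightarrow> p \<notin> NN n z)"
  unfolding closedin_def topspace_K K_open using NN_sub by blast

lemma closedpt_even: "p \<in> KT n \<Longrightarrow>
   (\<forall>z\<in>KT n. z \<noteq> p \<longrightarrow> p \<notin> NN n z) \<longleftrightarrow> (\<forall>i<n. even (p i))"
proof
  assume p: "p \<in> KT n" and H: "\<forall>z\<in>KT n. z \<noteq> p \<longrightarrow> p \<notin> NN n z"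
  show "\<forall>i<n. even (p i)"
  proof (rule ccontr)
    assume "\<not> (\<forall>i<n. even (p i))"
    then obtain i where i: "i < n" "odd (p i)" by blast
    define z where "z = p(i := p i + 1)"
    have "z \<in> KT n" using p i by (auto simp: z_def KT_def PiE_iff extensional_def)
    moreover have "z \<noteq> p" by (auto simp: z_def fun_eq_iff)
    moreover have "p \<in> NN n z" using p i N1_odd[of "p i"]
      by (auto simp: z_def NN_def KT_def PiE_iff N1_self)
    ultimately show False using H by blast
  qed
next
  assume p: "p \<in> KT n" and E: "\<forall>i<n. even (p i)"
  show "\<forall>z\<in>KT n. z \<noteq> p \<longrightarrow> p \<notin> NN n z"
  proof (intro ballI impI notI)
    fix z assume z: "z \<in> KT n" "z \<noteq> p" "p \<in> NN n z"
    have "z i = p i" for i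
    proof (cases "i < n")
      case True
      then show ?thesis using z(3) E N1_even unfolding NN_def by (auto simp: PiE_iff)
    next
      case False
      then show ?thesis using z(1) p by (auto simp: KT_def PiE_iff extensional_def)
    qed
    then show False using z(2) by auto
  qed
qed

lemma closed_set_eq: "{p \<in> KT n. \<forall>i<n. even (p i)} = {(\<lambda>i\<in>{..<n}. 2 * l i) | l :: nat \<Rightarrow> int. True}"
proof safe
  fix p assume p: "p \<in> KT n" "\<forall>i<n. even (p i)"
  have "p = (\<lambda>i\<in>{..<n}. 2 * (p i div 2))"
    using p by (auto simp: KT_def PiE_iff extensional_def fun_eq_iff)
  then show "\<exists>l. p = (\<lambda>i\<in>{..<n}. 2 * l i) \<and> True" by (intro exI[where x="\<lambda>i. p i div 2"]) simp
next
  fix l :: "nat \<Rightarrow> int"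
  show "(\<lambda>i\<in>{..<n}. 2 * l i) \<in> KT n" by (simp add: KT_def)
next
  fix l :: "nat \<Rightarrow> int" and i assume "i < n"
  then show "even ((\<lambda>i\<in>{..<n}. 2 * l i) i)" by simp
qed



lemma cp_iff: "closedin (khalimsky_space n) {p} \<longleftrightarrow> p \<in> KT n \<and> (\<forall>i<n. even (p i))"
proof (cases "p \<in> KT n")
  case True
  show ?thesis unfolding K_closed_pt closedpt_even[OF True] using True by simp
next
  case False
  then show ?thesis unfolding K_closed_pt by simp
qed

lemma graph_const:
  assumes f: "f \<in> KT n \<rightarrow> KT n"
    and cg: "closed_graph (khalimsky_space n) (khalimsky_space n) f"
  shows "\<exists>c. c \<in> KT n \<and> (\<forall>i<n. even (c i)) \<and> (\<forall>x\<in>KT n. f x = c)"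
proof -
  define G where "G = {(x, f x) | x. x \<in> KT n}"
  have "closedin (prod_topology (khalimsky_space n) (khalimsky_space n)) G"
    using cg unfolding closed_graph_def topspace_K G_def .
  then have op: "openin (prod_topology (khalimsky_space n) (khalimsky_space n)) (KT n \<times> KT n - G)"
    unfolding closedin_def topspace_prod_topology topspace_K by (rule conjunct2)
  have key: False if x: "x \<in> KT n" and y: "y \<in> KT n" and ne: "y \<noteq> f x"
      and x': "x' \<in> NN n x" and fy: "f x' \<in> NN n y" for x y x'
  proof -
    have "(x, y) \<notin> G" using ne unfolding G_def by auto
    then have "(x, y) \<in> KT n \<times> KT n - G" using x y by simp
    then obtain U V where UV: "openin (khalimsky_space n) U" "openin (khalimsky_space n) V"
        "x \<in> U" "y \<in> V" "U \<times> V \<subseteq> KT n \<times> KT n - G"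
      using op unfolding openin_prod_topology_alt by meson
    have "NN n x \<subseteq> U" using UV(1,3) unfolding K_open by simp
    then have "x' \<in> U" using x' by (rule subsetD)
    moreover have "NN n y \<subseteq> V" using UV(2,4) unfolding K_open by simp
    then have "f x' \<in> V" using fy by (rule subsetD)
    ultimately have "(x', f x') \<in> U \<times> V" by simp
    then have "(x', f x') \<notin> G" using UV(5) by (auto dest: subsetD)
    moreover have "x' \<in> KT n" using NN_sub x' by (rule subsetD)
    ultimately show False unfolding G_def by auto
  qed
  have fK: "f x \<in> KT n" if "x \<in> KT n" for x using f that by (rule funcset_mem)
  have cl: "\<forall>z\<in>KT n. z \<noteq> f x \<longrightarrow> f x \<notin> NN n z" if x: "x \<in> KT n" for x
  proof (intro ballI impI notI)
    fix z assume "z \<in> KT n" "z \<noteq> f x" "f x \<in> NN n z"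
    then show False by (rule key[OF x _ _ NN_self[OF x]])
  qed
  have loc: "f x' = f x" if x: "x \<in> KT n" and x': "x' \<in> NN n x" for x x'
  proof (rule ccontr)
    assume ne: "f x' \<noteq> f x"
    have x'K: "x' \<in> KT n" using NN_sub x' by (rule subsetD)
    then have "f x' \<in> NN n (f x')" by (intro NN_self fK)
    then show False using key[OF x fK[OF x'K] ne x'] by simp
  qed
  define x0 :: "nat \<Rightarrow> int" where "x0 = (\<lambda>i\<in>{..<n}. 0)"
  have x0: "x0 \<in> KT n" by (simp add: x0_def KT_def)
  define T where "T = {x \<in> KT n. f x = f x0}"
  have "openin (khalimsky_space n) T"
    unfolding K_open
  proof (intro conjI ballI subsetI)
    show "x \<in> KT n" if "x \<in> T" for x using that unfolding T_def by simp
    fix x y assume "x \<in> T" "y \<in> NN n x"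
    then show "y \<in> T" using loc[of x y] NN_sub unfolding T_def by auto
  qed
  moreover have "closedin (khalimsky_space n) T"
  proof -
    have e: "KT n - T = {x \<in> KT n. f x \<noteq> f x0}" unfolding T_def by auto
    have "openin (khalimsky_space n) {x \<in> KT n. f x \<noteq> f x0}"
      unfolding K_open
    proof (intro conjI ballI subsetI)
      show "x \<in> KT n" if "x \<in> {x \<in> KT n. f x \<noteq> f x0}" for x using that by simp
      fix x y assume "x \<in> {x \<in> KT n. f x \<noteq> f x0}" "y \<in> NN n x"
      then show "y \<in> {x \<in> KT n. f x \<noteq> f x0}" using loc[of x y] NN_sub by auto
    qed
    moreover have "T \<subseteq> KT n" unfolding T_def by auto
    ultimately show ?thesis unfolding closedin_def topspace_K e by simp
  qed
  ultimately have "T = {} \<or> T = KT n"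
    using K_connected[of n] unfolding connected_space_clopen_in topspace_K by simp
  moreover have "x0 \<in> T" using x0 unfolding T_def by simp
  ultimately have T: "T = KT n" by auto
  have "f x0 \<in> KT n" using fK x0 .
  moreover have "\<forall>i<n. even (f x0 i)"
    using closedpt_even[OF fK[OF x0]] cl[OF x0] by simp
  moreover have "\<forall>x\<in>KT n. f x = f x0"
  proof
    fix x assume "x \<in> KT n"
    then have "x \<in> T" using T by simp
    then show "f x = f x0" unfolding T_def by simp
  qed
  ultimately show ?thesis by (intro exI[where x="f x0"]) simp
qed

lemma const_graph:
  assumes c: "c \<in> KT n" "\<forall>i<n. even (c i)" and fx: "\<forall>x\<in>KT n. f x = c"
  shows "closed_graph (khalimsky_space n) (khalimsky_space n) f"
proof -
  have "{(x, f x) | x. x \<in> topspace (khalimsky_space n)} = KT n \<times> {c}"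
    using fx c unfolding topspace_K by auto
  moreover have "closedin (khalimsky_space n) {c}" using cp_iff c by simp
  moreover have "closedin (khalimsky_space n) (KT n)"
    using closedin_topspace[of "khalimsky_space n"] by (simp add: topspace_K)
  ultimately show ?thesis unfolding closed_graph_def
    by (simp add: closedin_prod_Times_iff)
qed


lemma countable_KT: "countable (KT n)"
  unfolding KT_def by (rule countable_PiE) auto

theorem mainTheorem9:
  fixes n :: nat
  assumes "n \<ge> 1"
  shows "connected_space (khalimsky_space n)
    \<and> alexandroff_space (khalimsky_space n)
    \<and> {y \<in> topspace (khalimsky_space n). closedin (khalimsky_space n) {y}}
        = {(\<lambda>i\<in>{..<n}. 2 * l i) | l :: nat \<Rightarrow> int. True}
    \<and> (\<forall>f. f \<in> topspace (khalimsky_space n) \<rightarrow> topspace (khalimsky_space n) \<longrightarrow>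
          (closed_graph (khalimsky_space n) (khalimsky_space n) f \<longleftrightarrow>
           (\<exists>l :: nat \<Rightarrow> int. \<forall>x\<in>topspace (khalimsky_space n).
               f x = (\<lambda>i\<in>{..<n}. 2 * l i))))
    \<and> countable {f \<in> topspace (khalimsky_space n) \<rightarrow>\<^sub>E topspace (khalimsky_space n).
                  closed_graph (khalimsky_space n) (khalimsky_space n) f}
    \<and> infinite {f \<in> topspace (khalimsky_space n) \<rightarrow>\<^sub>E topspace (khalimsky_space n).
                  closed_graph (khalimsky_space n) (khalimsky_space n) f}
    \<and> continuous_map (khalimsky_space n) (khalimsky_space n) (\<lambda>x. \<lambda>i\<in>{..<n}. 1)
    \<and> \<not> closed_graph (khalimsky_space n) (khalimsky_space n) (\<lambda>x. \<lambda>i\<in>{..<n}. 1)"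
proof -
  let ?K = "khalimsky_space n"
  have top: "topspace ?K = KT n" by (rule topspace_K)
  have n0: "0 < n" using assms by simp
  define C where "C = {p \<in> KT n. \<forall>i<n. even (p i)}"
  have c3: "{y \<in> topspace ?K. closedin ?K {y}} = {(\<lambda>i\<in>{..<n}. 2 * l i) | l :: nat \<Rightarrow> int. True}"
  proof -
    have "{y \<in> topspace ?K. closedin ?K {y}} = C"
      unfolding top cp_iff C_def by auto
    then show ?thesis using closed_set_eq[of n] unfolding C_def by simp
  qed
  have c4: "\<forall>f. f \<in> topspace ?K \<rightarrow> topspace ?K \<longrightarrow>
          (closed_graph ?K ?K f \<longleftrightarrow>
           (\<exists>l :: nat \<Rightarrow> int. \<forall>x\<in>topspace ?K. f x = (\<lambda>i\<in>{..<n}. 2 * l i)))"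
  proof (intro allI impI iffI)
    fix f assume f: "f \<in> topspace ?K \<rightarrow> topspace ?K" and cg: "closed_graph ?K ?K f"
    have f': "f \<in> KT n \<rightarrow> KT n" using f unfolding top .
    obtain c where c: "c \<in> KT n" "\<forall>i<n. even (c i)" "\<forall>x\<in>KT n. f x = c"
      using graph_const[OF f' cg] by blast
    have "c \<in> {p \<in> KT n. \<forall>i<n. even (p i)}" using c(1,2) by simp
    then have "c \<in> {(\<lambda>i\<in>{..<n}. 2 * l i) | l :: nat \<Rightarrow> int. True}"
      unfolding closed_set_eq .
    then obtain l :: "nat \<Rightarrow> int" where l: "c = (\<lambda>i\<in>{..<n}. 2 * l i)" by blast
    show "\<exists>l :: nat \<Rightarrow> int. \<forall>x\<in>topspace ?K. f x = (\<lambda>i\<in>{..<n}. 2 * l i)"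
      using c(3) l unfolding top by blast
  next
    fix f assume f: "f \<in> topspace ?K \<rightarrow> topspace ?K"
      and ex: "\<exists>l :: nat \<Rightarrow> int. \<forall>x\<in>topspace ?K. f x = (\<lambda>i\<in>{..<n}. 2 * l i)"
    then obtain l :: "nat \<Rightarrow> int" where l: "\<forall>x\<in>KT n. f x = (\<lambda>i\<in>{..<n}. 2 * l i)"
      unfolding top by blast
    have a: "(\<lambda>i\<in>{..<n}. 2 * l i) \<in> KT n" by (simp add: KT_def)
    have b: "\<forall>i<n. even ((\<lambda>i\<in>{..<n}. 2 * l i) i)" by simp
    show "closed_graph ?K ?K f" by (rule const_graph[OF a b l])
  qed
  define S where "S = {f \<in> topspace ?K \<rightarrow>\<^sub>E topspace ?K. closed_graph ?K ?K f}"
  have Seq: "S = (\<lambda>c. \<lambda>x\<in>KT n. c) ` C"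
  proof
    show "S \<subseteq> (\<lambda>c. \<lambda>x\<in>KT n. c) ` C"
    proof
      fix f assume "f \<in> S"
      then have fE: "f \<in> KT n \<rightarrow>\<^sub>E KT n" and cg: "closed_graph ?K ?K f"
        unfolding S_def top by auto
      have f': "f \<in> KT n \<rightarrow> KT n" using fE by (simp add: PiE_iff)
      obtain c where c: "c \<in> KT n" "\<forall>i<n. even (c i)" "\<forall>x\<in>KT n. f x = c"
        using graph_const[OF f' cg] by blast
      have "f = (\<lambda>x\<in>KT n. c)"
      proof
        fix x show "f x = (\<lambda>x\<in>KT n. c) x"
          using c(3) fE by (cases "x \<in> KT n") (auto simp: PiE_iff extensional_def)
      qed
      moreover have "c \<in> C" using c(1,2) unfolding C_def by simp
      ultimately show "f \<in> (\<lambda>c. \<lambda>x\<in>KT n. c) ` C" by (rule image_eqI)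
    qed
  next
    show "(\<lambda>c. \<lambda>x\<in>KT n. c) ` C \<subseteq> S"
    proof
      fix g assume "g \<in> (\<lambda>c. \<lambda>x\<in>KT n. c) ` C"
      then obtain c where c: "c \<in> C" and g: "g = (\<lambda>x\<in>KT n. c)" by blast
      have cK: "c \<in> KT n" "\<forall>i<n. even (c i)" using c unfolding C_def by simp_all
      have "g \<in> KT n \<rightarrow>\<^sub>E KT n" using cK(1) unfolding g by simp
      moreover have "closed_graph ?K ?K g"
        by (rule const_graph[OF cK]) (simp add: g)
      ultimately show "g \<in> S" unfolding S_def top by simp
    qed
  qed
  have cC: "countable C" unfolding C_def
    by (rule countable_subset[OF _ countable_KT[of n]]) auto
  have x0: "(\<lambda>i\<in>{..<n}. 0::int) \<in> KT n" by (simp add: KT_def)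
  have inj1: "inj_on (\<lambda>c. \<lambda>x\<in>KT n. c) C"
  proof (rule inj_onI)
    fix a b assume "(\<lambda>x\<in>KT n. a) = (\<lambda>x\<in>KT n. b)"
    then have "(\<lambda>x\<in>KT n. a) (\<lambda>i\<in>{..<n}. 0::int) = (\<lambda>x\<in>KT n. b) (\<lambda>i\<in>{..<n}. 0::int)" by simp
    then show "a = b" using x0 by simp
  qed
  have inj2: "inj (\<lambda>k::int. \<lambda>i\<in>{..<n}. 2 * k)"
  proof (rule injI)
    fix a b :: int assume "(\<lambda>i\<in>{..<n}. 2 * a) = (\<lambda>i\<in>{..<n}. 2 * b)"
    then have "(\<lambda>i\<in>{..<n}. 2 * a) 0 = (\<lambda>i\<in>{..<n}. 2 * b) 0" by simp
    then show "a = b" using n0 by simp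
  qed
  have "range (\<lambda>k::int. \<lambda>i\<in>{..<n}. 2 * k) \<subseteq> C"
  proof (rule image_subsetI)
    fix k :: int
    have "(\<lambda>i\<in>{..<n}. 2 * k) \<in> KT n" by (simp add: KT_def)
    then show "(\<lambda>i\<in>{..<n}. 2 * k) \<in> C" unfolding C_def by simp
  qed
  moreover have "infinite (range (\<lambda>k::int. \<lambda>i\<in>{..<n}. 2 * k))"
    using inj2 infinite_UNIV_int finite_imageD by blast
  ultimately have iC: "infinite C" using finite_subset by blast
  have c5: "countable S" unfolding Seq using cC by simp
  have c6: "infinite S" unfolding Seq using iC inj1 finite_imageD by blast
  have c7: "continuous_map ?K ?K (\<lambda>x. \<lambda>i\<in>{..<n}. 1::int)"
    by (simp add: top KT_def)
  have c8: "\<not> closed_graph ?K ?K (\<lambda>x. \<lambda>i\<in>{..<n}. 1::int)"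
  proof
    assume cg: "closed_graph ?K ?K (\<lambda>x. \<lambda>i\<in>{..<n}. 1::int)"
    have f': "(\<lambda>x. \<lambda>i\<in>{..<n}. 1::int) \<in> KT n \<rightarrow> KT n" by (simp add: KT_def)
    obtain c where c: "c \<in> KT n" "\<forall>i<n. even (c i)" "\<forall>x\<in>KT n. (\<lambda>i\<in>{..<n}. 1::int) = c"
      using graph_const[OF f' cg] by blast
    have "(\<lambda>i\<in>{..<n}. 1::int) = c" using c(1,3) by blast
    then have "c 0 = 1" using n0 by auto
    then show False using c(2) n0 by auto
  qed
  show ?thesis
    using K_connected[of n] K_alex[of n] c3 c4 c5 c6 c7 c8 unfolding S_def by blast
qed

end
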